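(* Let $P\subseteq\mathbb{R}^2$ be a convex polygon such that $\tau P=P^{\circ}$ and $P$ has exactly $6$ vertices. Then the area of $P$ equals $3$.
   Context: $\tau:\mathbb{R}^2\to\mathbb{R}^2$ denotes the $90^\circ$ counterclockwise rotation. The polar of $P$ is $P^{\circ}=\{x\in\mathbb{R}^2: y^\top x\le 1\text{ for all }y\in P\}$. *)

theory Defs
  imports "HOL-Analysis.Analysis"
begin

definition rot90 :: "real^2 \<Rightarrow> real^2" where
  "rot90 x = vector [- (x $ 2), x $ 1]"

definition polar :: "(real^2) set \<Rightarrow> (real^2) set" where
  "polar P = {x. \<forall>y\<in>P. y \<bullet> x \<le> 1}"

end

theory Submission
  imports Defs
begin

definition det2 :: "real^2 \<Rightarrow> real^2 \<Rightarrow> real" where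
  "det2 y z = y$1*z$2 - y$2*z$1"

definition lm :: "real \<Rightarrow> real \<Rightarrow> real \<Rightarrow> real \<Rightarrow> real^2 \<Rightarrow> real^2" where
  "lm a b d e c = vector [a*c$1 + b*c$2, d*c$1 + e*c$2]"

lemma lm_nth [simp]: "lm a b d e c $ 1 = a*c$1 + b*c$2" "lm a b d e c $ 2 = d*c$1 + e*c$2"
  by (simp_all add: lm_def)

lemma inner2: "(a::real^2) \<bullet> b = a$1*b$1 + a$2*b$2"
  by (simp add: inner_vec_def sum_2)

lemma rot_inner: "z \<bullet> rot90 y = det2 y z"
  by (simp add: inner2 rot90_def det2_def algebra_simps)

lemma rot_inj: "rot90 a = rot90 b \<Longrightarrow> a = b"
  by (simp add: rot90_def vec_eq_iff forall_2 vector_def)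

lemma lm_linear: "linear (lm a b d e)"
  by (rule linearI) (auto simp: vec_eq_iff forall_2 algebra_simps)

lemma lm_det: "det (matrix (lm a b d e)) = a*e - b*d"
  by (simp add: det_2 matrix_def axis_def lm_def)

lemma det2_simps [simp]:
  "det2 x x = 0" "det2 (-x) y = - det2 x y" "det2 x (-y) = - det2 x y"
  "det2 (x + y) z = det2 x z + det2 y z" "det2 (x - y) z = det2 x z - det2 y z"
  "det2 z (x + y) = det2 z x + det2 z y" "det2 z (x - y) = det2 z x - det2 z y"
  "det2 (c *\<^sub>R x) y = c * det2 x y" "det2 x (c *\<^sub>R y) = c * det2 x y"
  by (simp_all add: det2_def algebra_simps)

lemma det2_swap: "det2 y x = - det2 x y"
  by (simp add: det2_def algebra_simps)

lemma cramer: "det2 x y *\<^sub>R p = det2 p y *\<^sub>R x + det2 x p *\<^sub>R y"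
  by (simp add: vec_eq_iff forall_2 det2_def algebra_simps)

subsection \<open>The model hexagon\<close>

definition U2 :: "(real^2) set" where "U2 = cbox (vector[0,0]) (vector[1,1])"

lemma U2_mem: "c \<in> U2 \<longleftrightarrow> 0 \<le> c$1 \<and> c$1 \<le> 1 \<and> 0 \<le> c$2 \<and> c$2 \<le> 1"
  by (auto simp: U2_def mem_box_cart forall_2)

lemma U2_meas: "U2 \<in> lmeasurable" "measure lebesgue U2 = 1"
  unfolding U2_def apply simp
  apply (subst measure_completion, simp)
  apply (subst content_cbox_cart)
  apply (auto simp: mem_box_cart forall_2 set_eq_iff UNIV_2)
  by (rule exI[of _ "vector[0,0]"]) simp

definition Hx :: "(real^2) set" where
  "Hx = {c. \<bar>c$1\<bar> \<le> 1 \<and> \<bar>c$2\<bar> \<le> 1 \<and> \<bar>c$1 + c$2\<bar> \<le> 1}"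

lemma img_meas: "lm a b d e ` U2 \<in> lmeasurable" "measure lebesgue (lm a b d e ` U2) = \<bar>a*e - b*d\<bar>"
  using measurable_linear_image[OF lm_linear U2_meas(1)] measure_linear_image[OF lm_linear U2_meas(1)]
  by (simp_all add: lm_det U2_meas(2))

lemma R1: "p \<in> lm 1 (-1) 0 1 ` U2 \<longleftrightarrow> 0 \<le> p$2 \<and> p$2 \<le> 1 \<and> 0 \<le> p$1 + p$2 \<and> p$1 + p$2 \<le> 1"
proof
  assume "p \<in> lm 1 (-1) 0 1 ` U2" then show "0 \<le> p$2 \<and> p$2 \<le> 1 \<and> 0 \<le> p$1 + p$2 \<and> p$1 + p$2 \<le> 1"
    by (auto simp: U2_mem)
next
  assume h: "0 \<le> p$2 \<and> p$2 \<le> 1 \<and> 0 \<le> p$1 + p$2 \<and> p$1 + p$2 \<le> 1"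
  have "p = lm 1 (-1) 0 1 (vector[p$1 + p$2, p$2])" by (simp add: vec_eq_iff forall_2)
  moreover have "vector[p$1 + p$2, p$2] \<in> U2" using h by (simp add: U2_mem)
  ultimately show "p \<in> lm 1 (-1) 0 1 ` U2" by blast
qed

lemma R2: "p \<in> lm (-1) 0 1 (-1) ` U2 \<longleftrightarrow> -1 \<le> p$1 \<and> p$1 \<le> 0 \<and> -1 \<le> p$1 + p$2 \<and> p$1 + p$2 \<le> 0"
proof
  assume "p \<in> lm (-1) 0 1 (-1) ` U2" then show "-1 \<le> p$1 \<and> p$1 \<le> 0 \<and> -1 \<le> p$1 + p$2 \<and> p$1 + p$2 \<le> 0"
    by (auto simp: U2_mem)
next
  assume h: "-1 \<le> p$1 \<and> p$1 \<le> 0 \<and> -1 \<le> p$1 + p$2 \<and> p$1 + p$2 \<le> 0"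
  have "p = lm (-1) 0 1 (-1) (vector[- p$1, - p$1 - p$2])" by (simp add: vec_eq_iff forall_2)
  moreover have "vector[- p$1, - p$1 - p$2] \<in> U2" using h by (simp add: U2_mem)
  ultimately show "p \<in> lm (-1) 0 1 (-1) ` U2" by blast
qed

lemma R3: "p \<in> lm 1 0 0 (-1) ` U2 \<longleftrightarrow> 0 \<le> p$1 \<and> p$1 \<le> 1 \<and> -1 \<le> p$2 \<and> p$2 \<le> 0"
proof
  assume "p \<in> lm 1 0 0 (-1) ` U2" then show "0 \<le> p$1 \<and> p$1 \<le> 1 \<and> -1 \<le> p$2 \<and> p$2 \<le> 0"
    by (auto simp: U2_mem)
next
  assume h: "0 \<le> p$1 \<and> p$1 \<le> 1 \<and> -1 \<le> p$2 \<and> p$2 \<le> 0"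
  have "p = lm 1 0 0 (-1) (vector[p$1, - p$2])" by (simp add: vec_eq_iff forall_2)
  moreover have "vector[p$1, - p$2] \<in> U2" using h by (simp add: U2_mem)
  ultimately show "p \<in> lm 1 0 0 (-1) ` U2" by blast
qed

lemma Hx_meas: "Hx \<in> lmeasurable \<and> measure lebesgue Hx = 3"
proof -
  let ?A = "lm 1 (-1) 0 1 ` U2" and ?B = "lm (-1) 0 1 (-1) ` U2" and ?C = "lm 1 0 0 (-1) ` U2"
  have U: "?A \<union> ?B \<union> ?C = Hx"
    unfolding set_eq_iff Un_iff R1 R2 R3 Hx_def mem_Collect_eq by arith
  have n1: "negligible (?A \<inter> ?B)"
    by (rule negligible_subset[OF negligible_hyperplane[of "vector[1,1]" 0]])
       (unfold subset_iff Int_iff R1 R2 mem_Collect_eq inner2, auto simp: vec_eq_iff intro!: exI[of _ 1])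
  have n2: "negligible (?A \<inter> ?C)"
    by (rule negligible_subset[OF negligible_hyperplane[of "vector[0,1]" 0]])
       (unfold subset_iff Int_iff R1 R3 mem_Collect_eq inner2, auto simp: vec_eq_iff intro!: exI[of _ 2])
  have n3: "negligible (?B \<inter> ?C)"
    by (rule negligible_subset[OF negligible_hyperplane[of "vector[1,0]" 0]])
       (unfold subset_iff Int_iff R2 R3 mem_Collect_eq inner2, auto simp: vec_eq_iff intro!: exI[of _ 1])
  have "measure lebesgue Hx = 1 + 1 + 1"
    using measure_Un3_negligible[OF img_meas(1) img_meas(1) img_meas(1) n1 n2 n3 U]
    by (simp add: img_meas(2))
  moreover have "Hx \<in> lmeasurable" using U img_meas(1) by (metis sets.Un fmeasurable.Un)
  ultimately show ?thesis by simp
qed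


lemma seg_neg:
  assumes "-x \<in> open_segment a b" shows "x \<in> open_segment (-a) (-b)"
proof -
  from assms obtain u where "a \<noteq> b" "0 < u" "u < 1" "-x = (1 - u) *\<^sub>R a + u *\<^sub>R b"
    by (auto simp: in_segment)
  then have "-a \<noteq> -b" "x = (1 - u) *\<^sub>R (-a) + u *\<^sub>R (-b)"
    by (simp_all add: algebra_simps)
  with \<open>0 < u\<close> \<open>u < 1\<close> show ?thesis by (auto simp: in_segment)
qed

lemma neg_extreme:
  assumes "x extreme_point_of S" "\<And>y. y \<in> S \<Longrightarrow> -y \<in> S"
  shows "(-x) extreme_point_of S"
  using assms seg_neg unfolding extreme_point_of_def by blast

lemma collinear_ext:
  fixes u w :: "real^2"
  assumes "u extreme_point_of S" "w extreme_point_of S" "\<And>y. y \<in> S \<Longrightarrow> -y \<in> S"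
    "u \<noteq> 0" "w = c *\<^sub>R u" "\<bar>c\<bar> < 1"
  shows False
proof -
  have "-u \<in> S" "u \<in> S" using assms(1,3) by (auto simp: extreme_point_of_def)
  moreover have "-u \<noteq> u" proof
    assume "-u = u"
    then have "u$i = 0" for i by (metis vector_uminus_component neg_equal_zero)
    then show False using assms(4) by (simp add: vec_eq_iff)
  qed
  moreover have "w = (1 - (1+c)/2) *\<^sub>R (-u) + ((1+c)/2) *\<^sub>R u"
    using assms(5) by (simp add: vec_eq_iff field_simps)
  moreover have "0 < (1+c)/2" "(1+c)/2 < 1" using assms(6) by auto
  ultimately have "w \<in> open_segment (-u) u" unfolding in_segment by blast
  with assms(2) \<open>-u \<in> S\<close> \<open>u \<in> S\<close> show False by (auto simp: extreme_point_of_def)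
qed

lemma par2:
  assumes "det2 u w = 0" "u \<noteq> 0"
  shows "\<exists>c. w = c *\<^sub>R u"
proof (cases "u$1 = 0")
  case True
  then have "u$2 \<noteq> 0" using assms(2) by (auto simp: vec_eq_iff forall_2)
  then show ?thesis using assms(1) True
    by (intro exI[of _ "w$2 / u$2"]) (auto simp: vec_eq_iff forall_2 det2_def field_simps)
next
  case False
  then show ?thesis using assms(1)
    by (intro exI[of _ "w$1 / u$1"]) (auto simp: vec_eq_iff forall_2 det2_def field_simps)
qed

lemma choose3:
  assumes "det2 p q \<noteq> 0" "det2 p r \<noteq> 0" "det2 q r \<noteq> 0"
  shows "\<exists>x y z. {p,-p,q,-q,r,-r} = {x,-x,y,-y,z,-z} \<and> det2 x y > 0 \<and> det2 x z > 0 \<and> det2 y z > 0"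
proof -
  obtain y where y: "y \<in> {q,-q}" "det2 p y > 0"
    using assms(1) by (cases "det2 p q > 0") (auto intro: that[of "-q"])
  obtain z where z: "z \<in> {r,-r}" "det2 p z > 0"
    using assms(2) by (cases "det2 p r > 0") (auto intro: that[of "-r"])
  have e1: "{q,-q} = {y,-y}" "{r,-r} = {z,-z}" using y(1) z(1) by auto
  have "det2 y z \<noteq> 0" using y(1) z(1) assms(3) by auto
  show ?thesis
  proof (cases "det2 y z > 0")
    case True
    then show ?thesis using y z e1 by (intro exI[of _ p] exI[of _ y] exI[of _ z]) auto
  next
    case False
    with \<open>det2 y z \<noteq> 0\<close> have "det2 z y > 0" by (simp add: det2_swap[of z y])
    then show ?thesis using y z e1 by (intro exI[of _ p] exI[of _ z] exI[of _ y]) auto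
  qed
qed


lemma halfplane_convex: "convex {z. det2 a z \<le> (1::real)}"
proof -
  have "inner (rot90 a) z = det2 a z" for z
    by (simp add: inner2 rot90_def det2_def algebra_simps)
  then show ?thesis using convex_halfspace_le[of "rot90 a" 1] by simp
qed

lemma outdeg:
  assumes fin: "finite V" and PV: "P = convex hull V" and ext: "x extreme_point_of P"
    and memP: "\<And>p. p \<in> P \<longleftrightarrow> (\<forall>z\<in>P. det2 p z \<le> 1)"
    and x0: "x \<noteq> 0"
  shows "\<exists>w1 w2. w1 \<in> V \<and> w2 \<in> V \<and> w1 \<noteq> w2 \<and> det2 x w1 = 1 \<and> det2 x w2 = 1"
proof (rule ccontr)
  assume nc: "\<not> ?thesis"
  have VP: "V \<subseteq> P" unfolding PV by (rule hull_subset)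
  have hc: "a \<in> P" if "\<forall>w\<in>V. det2 a w \<le> 1" for a
  proof -
    have "V \<subseteq> {z. det2 a z \<le> 1}" using that by blast
    then have "P \<subseteq> {z. det2 a z \<le> 1}"
      unfolding PV using halfplane_convex by (rule hull_minimal)
    then have "\<forall>z\<in>P. det2 a z \<le> 1" by blast
    then show ?thesis using memP[of a] by blast
  qed
  have xP: "x \<in> P" using ext by (simp add: extreme_point_of_def)
  have xall: "\<forall>z\<in>P. det2 x z \<le> 1" using memP[of x] xP by simp
  have xle: "det2 x w \<le> 1" if "w \<in> V" for w using xall VP that by (simp add: subset_iff)
  obtain d where d0: "d \<noteq> 0" and dt: "\<forall>w\<in>V. det2 x w = 1 \<longrightarrow> det2 d w = 0"
  proof (cases "\<exists>w0\<in>V. det2 x w0 = 1")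
    case True
    then obtain w0 where w0: "w0 \<in> V" "det2 x w0 = 1" by blast
    then have "w0 \<noteq> 0" by (auto simp: det2_def)
    moreover have "\<forall>w\<in>V. det2 x w = 1 \<longrightarrow> det2 w0 w = 0"
    proof (intro ballI impI)
      fix w assume "w \<in> V" "det2 x w = 1"
      then have "w = w0" using nc w0 by blast
      then show "det2 w0 w = 0" by simp
    qed
    ultimately show ?thesis using that by blast
  next
    case False
    then show ?thesis using that[of x] x0 by blast
  qed
  have ev1: "\<forall>w\<in>V. \<forall>\<^sub>F e in at_right (0::real). det2 x w < 1 \<longrightarrow> e * \<bar>det2 d w\<bar> < 1 - det2 x w"
  proof
    fix w assume "w \<in> V"
    show "\<forall>\<^sub>F e in at_right (0::real). det2 x w < 1 \<longrightarrow> e * \<bar>det2 d w\<bar> < 1 - det2 x w"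
    proof (cases "det2 x w < 1")
      case True
      have t: "((\<lambda>e. e * \<bar>det2 d w\<bar>) \<longlongrightarrow> 0 * \<bar>det2 d w\<bar>) (at_right (0::real))"
        by (rule tendsto_mult_right) (rule tendsto_ident_at)
      have "0 * \<bar>det2 d w\<bar> < 1 - det2 x w" using True by simp
      then have "\<forall>\<^sub>F e in at_right (0::real). e * \<bar>det2 d w\<bar> < 1 - det2 x w"
        by (rule order_tendstoD(2)[OF t])
      then show ?thesis by (rule eventually_mono) (rule impI)
    next
      case False
      then show ?thesis by simp
    qed
  qed
  have "\<forall>\<^sub>F e in at_right (0::real). 0 < e \<and> (\<forall>w\<in>V. det2 x w < 1 \<longrightarrow> e * \<bar>det2 d w\<bar> < 1 - det2 x w)"
    using eventually_at_right_less eventually_ball_finite[OF fin ev1] by (rule eventually_conj)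
  then have "\<exists>e. 0 < e \<and> (\<forall>w\<in>V. det2 x w < 1 \<longrightarrow> e * \<bar>det2 d w\<bar> < 1 - det2 x w)"
    using eventually_happens trivial_limit_at_right_real by blast
  then obtain e where e0: "0 < e" and eV: "\<forall>w\<in>V. det2 x w < 1 \<longrightarrow> e * \<bar>det2 d w\<bar> < 1 - det2 x w"
    by blast
  have aP: "x + e *\<^sub>R d \<in> P"
  proof (rule hc, intro ballI)
    fix w assume w: "w \<in> V"
    show "det2 (x + e *\<^sub>R d) w \<le> 1"
    proof (cases "det2 x w = 1")
      case True then show ?thesis using dt w by simp
    next
      case False
      then have "det2 x w < 1" using xle[OF w] False by linarith
      then have "e * \<bar>det2 d w\<bar> < 1 - det2 x w" using eV w by blast
      moreover have "e * det2 d w \<le> e * \<bar>det2 d w\<bar>" using e0 by (intro mult_left_mono) auto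
      ultimately show ?thesis by simp
    qed
  qed
  have bP: "x - e *\<^sub>R d \<in> P"
  proof (rule hc, intro ballI)
    fix w assume w: "w \<in> V"
    show "det2 (x - e *\<^sub>R d) w \<le> 1"
    proof (cases "det2 x w = 1")
      case True then show ?thesis using dt w by simp
    next
      case False
      then have "det2 x w < 1" using xle[OF w] False by linarith
      then have "e * \<bar>det2 d w\<bar> < 1 - det2 x w" using eV w by blast
      moreover have "- (e * det2 d w) \<le> e * \<bar>det2 d w\<bar>" using e0
        by (metis abs_ge_minus_self abs_mult abs_of_pos)
      ultimately show ?thesis by simp
    qed
  qed
  have "x - e *\<^sub>R d \<noteq> x + e *\<^sub>R d" using e0 d0 by (auto simp: vec_eq_iff)
  then have "midpoint (x - e *\<^sub>R d) (x + e *\<^sub>R d) \<in> open_segment (x - e *\<^sub>R d) (x + e *\<^sub>R d)"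
    by simp
  moreover have "midpoint (x - e *\<^sub>R d) (x + e *\<^sub>R d) = x"
    by (simp add: midpoint_def vec_eq_iff field_simps)
  moreover have "x \<notin> open_segment (x - e *\<^sub>R d) (x + e *\<^sub>R d)"
    using ext aP bP unfolding extreme_point_of_def by blast
  ultimately show False by simp
qed


lemma lm_eq: "lm (x$1) (y$1) (x$2) (y$2) c = c$1 *\<^sub>R x + c$2 *\<^sub>R y"
  by (simp add: vec_eq_iff forall_2 algebra_simps)

theorem proposition7:
  fixes P :: "(real^2) set"
  assumes "polytope P"
    and "rot90 ` P = polar P"
    and "card {v. v extreme_point_of P} = 6"
  shows "measure lebesgue P = 3"
proof -
  define V where "V = {v. v extreme_point_of P}"
  have cP: "compact P" "convex P"
    using assms(1) polytope_imp_compact polytope_imp_convex by auto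
  have PV: "P = convex hull V"
    using Krein_Milman_Minkowski[OF cP] V_def by simp
  have cV: "card V = 6" using assms(3) V_def by simp
  have fin: "finite V" using cV card.infinite by fastforce
  have VP: "V \<subseteq> P" unfolding PV by (rule hull_subset)
  have A: "det2 y z \<le> 1" if "y \<in> P" "z \<in> P" for y z
  proof -
    have "rot90 y \<in> polar P" using assms(2) that(1) by blast
    then have "z \<bullet> rot90 y \<le> 1" using that(2) unfolding polar_def by blast
    then show ?thesis by (simp add: rot_inner)
  qed
  have memP: "p \<in> P \<longleftrightarrow> (\<forall>z\<in>P. det2 p z \<le> 1)" for p
  proof
    assume "p \<in> P" then show "\<forall>z\<in>P. det2 p z \<le> 1" using A by blast
  next
    assume h: "\<forall>z\<in>P. det2 p z \<le> 1"
    have "rot90 p \<in> polar P" unfolding polar_def using h by (simp add: rot_inner)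
    then obtain w where "w \<in> P" "rot90 p = rot90 w" using assms(2) by (metis imageE)
    then show "p \<in> P" using rot_inj by metis
  qed
  have negP: "-y \<in> P" if "y \<in> P" for y
  proof -
    have "\<forall>z\<in>P. det2 (-y) z \<le> 1"
    proof
      fix z assume "z \<in> P"
      then have "det2 z y \<le> 1" using A that by blast
      then show "det2 (-y) z \<le> 1" using det2_swap[of z y] by simp
    qed
    then show ?thesis using memP by blast
  qed
  have Vneg: "-v \<in> V" if "v \<in> V" for v
    using that neg_extreme[of v P] negP unfolding V_def by blast
  have Vext: "v extreme_point_of P" if "v \<in> V" for v using that V_def by simp
  have V0: "0 \<notin> V"
  proof
    assume "0 \<in> V"
    have "\<not> V \<subseteq> {0}"
    proof
      assume "V \<subseteq> {0}"
      then have "card V \<le> card {0::real^2}" by (intro card_mono) auto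
      then show False using cV by simp
    qed
    then obtain v where v: "v \<in> V" "v \<noteq> 0" by blast
    then have "v \<in> P" "-v \<in> P" using VP negP by auto
    moreover have "-v \<noteq> v" using v(2) by (auto simp: vec_eq_iff)
    then have "midpoint (-v) v \<in> open_segment (-v) v" by simp
    moreover have "midpoint (-v) v = 0" by (simp add: midpoint_def)
    ultimately show False using Vext[OF \<open>0 \<in> V\<close>] unfolding extreme_point_of_def by metis
  qed
  have coll: "w = u \<or> w = -u" if u: "u \<in> V" and w: "w \<in> V" and d: "det2 u w = 0" for u w
  proof -
    have u0: "u \<noteq> 0" and w0: "w \<noteq> 0" using V0 u w by auto
    obtain c where c: "w = c *\<^sub>R u" using par2[OF d u0] by blast
    have "c \<noteq> 0" using c w0 by auto
    have "\<not> \<bar>c\<bar> < 1"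
      using collinear_ext[OF Vext[OF u] Vext[OF w] negP u0 c] by blast
    moreover have "\<not> \<bar>c\<bar> > 1"
    proof
      assume "\<bar>c\<bar> > 1"
      then have "\<bar>1/c\<bar> < 1" by (simp add: divide_less_eq)
      moreover have "u = (1/c) *\<^sub>R w" using c \<open>c \<noteq> 0\<close> by simp
      ultimately show False
        using collinear_ext[OF Vext[OF w] Vext[OF u] negP w0] by blast
    qed
    ultimately have "c = 1 \<or> c = -1" by linarith
    then show ?thesis using c by auto
  qed
  obtain p where p: "p \<in> V" using cV by fastforce
  have p0: "p \<noteq> 0" using p V0 by auto
  have pn: "-p \<noteq> p" using p0 by (auto simp: vec_eq_iff)
  have c1: "card (V - {p,-p}) = 4"
    using p Vneg[OF p] pn fin cV by (subst card_Diff_subset) auto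
  then have "V - {p,-p} \<noteq> {}" by (metis card.empty zero_neq_numeral)
  then obtain q where q: "q \<in> V - {p,-p}" by blast
  have q0: "q \<noteq> 0" using q V0 by auto
  have qn: "-q \<noteq> q" using q0 by (auto simp: vec_eq_iff)
  have qV: "q \<in> V" "-q \<in> V" using q Vneg by auto
  have qd: "q \<noteq> p" "q \<noteq> -p" "-q \<noteq> p" "-q \<noteq> -p" using q by auto
  have c2: "card (V - {p,-p,q,-q}) = 2"
  proof -
    have "card {p,-p,q,-q} = 4" using pn qn qd by auto
    then show ?thesis using p Vneg[OF p] qV fin cV by (subst card_Diff_subset) auto
  qed
  then have "V - {p,-p,q,-q} \<noteq> {}" by (metis card.empty zero_neq_numeral)
  then obtain r where r: "r \<in> V - {p,-p,q,-q}" by blast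
  have r0: "r \<noteq> 0" using r V0 by auto
  have rn: "-r \<noteq> r" using r0 by (auto simp: vec_eq_iff)
  have rV: "r \<in> V" "-r \<in> V" using r Vneg by auto
  have rd: "r \<noteq> p" "r \<noteq> -p" "r \<noteq> q" "r \<noteq> -q" "-r \<noteq> p" "-r \<noteq> -p" "-r \<noteq> q" "-r \<noteq> -q"
    using r by auto
  have SV: "{p,-p,q,-q,r,-r} = V"
  proof (rule card_subset_eq[OF fin])
    show "{p,-p,q,-q,r,-r} \<subseteq> V" using p Vneg[OF p] qV rV by auto
    show "card {p,-p,q,-q,r,-r} = card V" using cV pn qn rn qd rd by auto
  qed
  have "det2 p q \<noteq> 0" using coll[OF p qV(1)] qd by auto
  moreover have "det2 p r \<noteq> 0" using coll[OF p rV(1)] rd by auto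
  moreover have "det2 q r \<noteq> 0" using coll[OF qV(1) rV(1)] rd by auto
  ultimately obtain x y z where VV: "V = {x,-x,y,-y,z,-z}"
    and pxy: "det2 x y > 0" and pxz: "det2 x z > 0" and pyz: "det2 y z > 0"
    using choose3 SV by metis
  have xV: "x \<in> V" and yV: "y \<in> V" using VV by auto
  have x0: "x \<noteq> 0" and y0: "y \<noteq> 0" using V0 xV yV by auto
  have memP': "\<And>p. p \<in> P \<longleftrightarrow> (\<forall>z\<in>P. det2 p z \<le> 1)" using memP by blast
  obtain w1 w2 where w: "w1 \<in> V" "w2 \<in> V" "w1 \<noteq> w2" "det2 x w1 = 1" "det2 x w2 = 1"
    using outdeg[OF fin PV Vext[OF xV] memP' x0] by blast
  have "w1 = y \<or> w1 = z" "w2 = y \<or> w2 = z"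
    using w pxy pxz unfolding VV by auto
  then have dxy: "det2 x y = 1" and dxz: "det2 x z = 1" using w by auto
  obtain u1 u2 where u: "u1 \<in> V" "u2 \<in> V" "u1 \<noteq> u2" "det2 y u1 = 1" "det2 y u2 = 1"
    using outdeg[OF fin PV Vext[OF yV] memP' y0] by blast
  have sw: "det2 y x = - det2 x y" by (rule det2_swap)
  have "u1 = z \<or> u1 = -x" "u2 = z \<or> u2 = -x"
    using u pxy pyz sw unfolding VV by auto
  then have dyz: "det2 y z = 1" using u by auto
  have "det2 x y *\<^sub>R z = det2 z y *\<^sub>R x + det2 x z *\<^sub>R y" by (rule cramer)
  moreover have "det2 z y = -1" using dyz det2_swap[of z y] by simp
  ultimately have zeq: "z = y - x" using dxy dxz by simp
  have VV2: "V = {x,-x,y,-y,y-x,-(y-x)}" using VV zeq by simp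
  have memV: "p \<in> P \<longleftrightarrow> (\<forall>w\<in>V. det2 p w \<le> 1)" for p
  proof
    assume "p \<in> P" then show "\<forall>w\<in>V. det2 p w \<le> 1" using A VP by blast
  next
    assume h: "\<forall>w\<in>V. det2 p w \<le> 1"
    have "V \<subseteq> {z. det2 p z \<le> 1}" using h by blast
    then have "P \<subseteq> {z. det2 p z \<le> 1}"
      unfolding PV using halfplane_convex by (rule hull_minimal)
    then have "\<forall>z\<in>P. det2 p z \<le> 1" by blast
    then show "p \<in> P" using memP[of p] by blast
  qed
  define L where "L = lm (x$1) (y$1) (x$2) (y$2)"
  have Lc: "L c = c$1 *\<^sub>R x + c$2 *\<^sub>R y" for c unfolding L_def by (rule lm_eq)
  have dL: "det2 (L c) w = c$1 * det2 x w + c$2 * det2 y w" for c w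
    unfolding Lc by simp
  have dyx: "det2 y x = -1" using dxy sw by simp
  have PL: "P = L ` Hx"
  proof
    show "P \<subseteq> L ` Hx"
    proof
      fix p assume pP: "p \<in> P"
      then have hp: "\<forall>w\<in>V. det2 p w \<le> 1" using memV by blast
      define c where "c = (vector [det2 p y, det2 x p] :: real^2)"
      have "L c = det2 p y *\<^sub>R x + det2 x p *\<^sub>R y" unfolding Lc c_def by simp
      also have "\<dots> = det2 x y *\<^sub>R p" by (rule cramer[symmetric])
      also have "\<dots> = p" using dxy by simp
      finally have "L c = p" .
      moreover have "c \<in> Hx"
        using hp det2_swap[of x p] unfolding VV2 Hx_def c_def by (auto simp: abs_le_iff)
      ultimately show "p \<in> L ` Hx" by blast
    qed
  next
    show "L ` Hx \<subseteq> P"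
    proof
      fix p assume "p \<in> L ` Hx"
      then obtain c where c: "c \<in> Hx" "p = L c" by blast
      have "\<forall>w\<in>V. det2 p w \<le> 1"
        using c dxy dyx unfolding VV2 Hx_def by (auto simp: dL abs_le_iff)
      then show "p \<in> P" using memV by blast
    qed
  qed
  have "measure lebesgue P = \<bar>det (matrix L)\<bar> * measure lebesgue Hx"
    unfolding PL L_def by (rule measure_linear_image[OF lm_linear]) (use Hx_meas in blast)
  also have "det (matrix L) = 1" unfolding L_def lm_det using dxy by (simp add: det2_def mult.commute)
  finally show ?thesis using Hx_meas by simp
qed

end
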